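(* Let $s(t)$, $F_\mu$ be as in the context. Put $s_i=s(t_i)$ ($i=1,2$) and define the power series in $t_1,t_2$ \[ m=\frac{s_1-s_2}{t_1-t_2},\qquad b=\frac{t_1s_2-t_2s_1}{t_1-t_2},\qquad n=m+t_1t_2\,\frac{1+\mu_2m+\mu_4m^2+\mu_6m^3}{1-\mu_3b-\mu_6b^2}. \] Then \[ F_\mu(t_1,t_2)=\Big(t_1+t_2-\mu_1t_1t_2-\mu_3\big((t_1+t_2)b+t_1t_2m\big)-\mu_4t_1t_2b-\mu_6b\big((t_1+t_2)b+2t_1t_2m\big)\Big)\cdot\frac{1+\mu_2m+\mu_4m^2+\mu_6m^3}{(1+\mu_2n+\mu_4n^2+\mu_6n^3)(1-\mu_3b-\mu_6b^2)^2}. \]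
   Context: Let $\mu_1,\mu_2,\mu_3,\mu_4,\mu_6$ be independent indeterminates, $E=\mathbb{Z}[\mu_1,\mu_2,\mu_3,\mu_4,\mu_6]$. Consider the projective cubic $Y^2Z+\mu_1XYZ+\mu_3YZ^2=X^3+\mu_2X^2Z+\mu_4XZ^2+\mu_6Z^3$ with the chord-tangent group law: neutral element $O=(0:1:0)$, and three points sum to zero iff they are the intersection points (with multiplicity) of the curve with a line. In Tate coordinates $t=-X/Y$, $s=-Z/Y$ the curve reads $s=t^3+\mu_1ts+\mu_2t^2s+\mu_3s^2+\mu_4ts^2+\mu_6s^3$; $s(t)\in E[[t]]$ is the unique power series solution with $s(0)=0$, so points near $O$ are $(t,s(t))$. The general elliptic formal group law $F_\mu(t_1,t_2)$ is the power series giving the $t$-coordinate of $P_1+P_2$, where $P_i=(t_i,s(t_i))$. (The line through $P_1,P_2$ is $s=mt+b$; the series $n$ equals the slope $s_3/t_3$ of the line through $O$ and the third intersection point $(t_3,s_3)$ of that line with the curve.) *)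

theory Defs
  imports "HOL-Computational_Algebra.Computational_Algebra"
begin

section \<open>Coefficient ring: E = Z[mu1,mu2,mu3,mu4,mu6], embedded in its fraction field\<close>

type_synonym E = "int poly poly poly poly poly"

definition mu1 :: "E fract" where "mu1 = Fract [:[:[:[:[:0,1:]:]:]:]:] 1"
definition mu2 :: "E fract" where "mu2 = Fract [:[:[:[:0,1:]:]:]:] 1"
definition mu3 :: "E fract" where "mu3 = Fract [:[:[:0,1:]:]:] 1"
definition mu4 :: "E fract" where "mu4 = Fract [:[:0,1:]:] 1"
definition mu6 :: "E fract" where "mu6 = Fract [:0,1:] 1"

text \<open>t1 is the inner variable, t2 the outer one.\<close>

definition T1 :: "'a::comm_ring_1 fps fps" where "T1 = fps_const fps_X"
definition T2 :: "'a::comm_ring_1 fps fps" where "T2 = fps_X"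

definition cc :: "'a::comm_ring_1 \<Rightarrow> 'a fps fps" where "cc a = fps_const (fps_const a)"

definition at_t1 :: "'a::comm_ring_1 fps \<Rightarrow> 'a fps fps" where "at_t1 f = fps_const f"
definition at_t2 :: "'a::comm_ring_1 fps \<Rightarrow> 'a fps fps" where
  "at_t2 f = Abs_fps (\<lambda>n. fps_const (f $ n))"

text \<open>exact quotient in a ring (used where the divisor is not a unit, e.g. t1 - t2)\<close>
definition qdiv :: "'r::comm_ring_1 \<Rightarrow> 'r \<Rightarrow> 'r" where
  "qdiv a d = (THE q. q * d = a)"

definition tate_s :: "'a::field \<Rightarrow> 'a \<Rightarrow> 'a \<Rightarrow> 'a \<Rightarrow> 'a \<Rightarrow> 'a fps" where
  "tate_s a1 a2 a3 a4 a6 = (THE s. s $ 0 = 0 \<and>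
     s = fps_X ^ 3 + fps_const a1 * fps_X * s + fps_const a2 * fps_X ^ 2 * s
       + fps_const a3 * s ^ 2 + fps_const a4 * fps_X * s ^ 2 + fps_const a6 * s ^ 3)"

text \<open>Its roots (with multiplicity) are the t-coordinates of the intersection points.\<close>
definition line_cubic :: "'r::comm_ring_1 \<Rightarrow> 'r \<Rightarrow> 'r \<Rightarrow> 'r \<Rightarrow> 'r \<Rightarrow> 'r \<Rightarrow> 'r \<Rightarrow> 'r poly" where
  "line_cubic a1 a2 a3 a4 a6 M B =
     (let L = [:B, M:]; t = [:0, 1:] in
      t ^ 3 + smult a1 (t * L) + smult a2 (t ^ 2 * L) + smult a3 (L ^ 2)
      + smult a4 (t * L ^ 2) + smult a6 (L ^ 3) - L)"

definition third_t :: "'r::comm_ring_1 \<Rightarrow> 'r \<Rightarrow> 'r \<Rightarrow> 'r \<Rightarrow> 'r \<Rightarrow> 'r \<Rightarrow> 'r \<Rightarrow> 'r \<Rightarrow> 'r \<Rightarrow> 'r" where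
  "third_t a1 a2 a3 a4 a6 M B u v = (THE w.
     line_cubic a1 a2 a3 a4 a6 M B =
       smult (coeff (line_cubic a1 a2 a3 a4 a6 M B) 3) ([:-u, 1:] * [:-v, 1:] * [:-w, 1:]))"

definition chord_m :: "'a::field \<Rightarrow> 'a \<Rightarrow> 'a \<Rightarrow> 'a \<Rightarrow> 'a \<Rightarrow> 'a fps fps" where
  "chord_m a1 a2 a3 a4 a6 =
     (let s = tate_s a1 a2 a3 a4 a6 in qdiv (at_t1 s - at_t2 s) (T1 - T2))"

definition chord_b :: "'a::field \<Rightarrow> 'a \<Rightarrow> 'a \<Rightarrow> 'a \<Rightarrow> 'a \<Rightarrow> 'a fps fps" where
  "chord_b a1 a2 a3 a4 a6 =
     (let s = tate_s a1 a2 a3 a4 a6 in qdiv (T1 * at_t2 s - T2 * at_t1 s) (T1 - T2))"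

text \<open>P3 = (t3, s3) is the third intersection point of the chord with the curve, so
  P1 + P2 = -P3; -P3 is the third intersection point of the line through O = (0,0)
  and P3 (slope s3/t3) with the curve.\<close>
definition formal_group_F :: "'a::field \<Rightarrow> 'a \<Rightarrow> 'a \<Rightarrow> 'a \<Rightarrow> 'a \<Rightarrow> 'a fps fps" where
  "formal_group_F a1 a2 a3 a4 a6 =
     (let M = chord_m a1 a2 a3 a4 a6; B = chord_b a1 a2 a3 a4 a6;
          c = cc a1; d = cc a2; e = cc a3; f = cc a4; g = cc a6;
          t3 = third_t c d e f g M B T1 T2;
          s3 = M * t3 + B;
          N = qdiv s3 t3
      in third_t c d e f g N 0 0 t3)"

end

theory Submission
  imports Defs
begin


lemma Xpow_dvd_iff: "fps_X ^ n dvd (f::'a::comm_ring_1 fps) \<longleftrightarrow> (\<forall>i<n. f $ i = 0)"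
proof
  assume "fps_X ^ n dvd f"
  then obtain g where "f = fps_X ^ n * g" by (elim dvdE)
  then show "\<forall>i<n. f $ i = 0" by (simp add: fps_X_power_mult_nth)
next
  assume h: "\<forall>i<n. f $ i = 0"
  have "f = fps_X ^ n * fps_shift n f"
    by (rule fps_ext) (simp add: fps_X_power_mult_nth h)
  then show "fps_X ^ n dvd f" by (metis dvd_triv_left)
qed

lemma X_dvd_iff: "fps_X dvd (f::'a::comm_ring_1 fps) \<longleftrightarrow> f $ 0 = 0"
  using Xpow_dvd_iff[of 1 f] by simp

lemma all_Xpow_dvd: "(\<And>n. fps_X ^ n dvd (f::'a::comm_ring_1 fps)) \<Longrightarrow> f = 0"
  by (metis Xpow_dvd_iff fps_ext fps_zero_nth lessI)

definition Phi :: "'a::field \<Rightarrow> 'a \<Rightarrow> 'a \<Rightarrow> 'a \<Rightarrow> 'a \<Rightarrow> 'a fps \<Rightarrow> 'a fps" where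
  "Phi a1 a2 a3 a4 a6 s = fps_X ^ 3 + fps_const a1 * fps_X * s + fps_const a2 * fps_X ^ 2 * s
       + fps_const a3 * s ^ 2 + fps_const a4 * fps_X * s ^ 2 + fps_const a6 * s ^ 3"

lemma Phi_X: "fps_X dvd f \<Longrightarrow> fps_X dvd Phi a1 a2 a3 a4 a6 f"
  unfolding Phi_def by (intro dvd_add) (auto simp: power2_eq_square power3_eq_cube)

lemma Phi_contr:
  assumes f: "fps_X dvd f" and g: "fps_X dvd g" and d: "fps_X ^ n dvd f - g"
  shows "fps_X ^ Suc n dvd Phi a1 a2 a3 a4 a6 f - Phi a1 a2 a3 a4 a6 g"
proof -
  have eq: "Phi a1 a2 a3 a4 a6 f - Phi a1 a2 a3 a4 a6 g = (f - g) *
    (fps_X * (fps_const a1 + fps_const a2 * fps_X) + (f + g) * (fps_const a3 + fps_const a4 * fps_X)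
     + fps_const a6 * (f*f + f*g + g*g))"
    unfolding Phi_def by (simp add: algebra_simps power2_eq_square power3_eq_cube)
  have "fps_X dvd (fps_X * (fps_const a1 + fps_const a2 * fps_X) + (f + g) * (fps_const a3 + fps_const a4 * fps_X)
     + fps_const a6 * (f*f + f*g + g*g))"
    using f g by (intro dvd_add) auto
  from mult_dvd_mono[OF d this] show ?thesis unfolding eq by (metis power_Suc2)
qed

definition Pit where "Pit a1 a2 a3 a4 a6 k = ((Phi a1 a2 a3 a4 a6) ^^ k) 0"

lemma Pit_X: "fps_X dvd Pit a1 a2 a3 a4 a6 k"
  by (induction k) (auto simp: Pit_def Phi_X)

lemma Pit_step: "fps_X ^ k dvd Pit a1 a2 a3 a4 a6 (Suc k) - Pit a1 a2 a3 a4 a6 k"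
proof (induction k)
  case (Suc k)
  then show ?case using Phi_contr[OF Pit_X Pit_X Suc, of a1 a2 a3 a4 a6]
    by (simp add: Pit_def)
qed simp

lemma Pit_le: "k \<le> m \<Longrightarrow> fps_X ^ k dvd Pit a1 a2 a3 a4 a6 m - Pit a1 a2 a3 a4 a6 k"
proof (induction m rule: dec_induct)
  case (step m)
  have "fps_X ^ k dvd fps_X ^ m" using step(1) by (simp add: le_imp_power_dvd)
  then have "fps_X ^ k dvd Pit a1 a2 a3 a4 a6 (Suc m) - Pit a1 a2 a3 a4 a6 m"
    using Pit_step dvd_trans by blast
  from dvd_add[OF this step(3)] show ?case by simp
qed simp

lemma tate_s_ex:
  "\<exists>s. s $ 0 = 0 \<and> s = Phi a1 a2 a3 a4 a6 s"
proof -
  let ?P = "Pit a1 a2 a3 a4 a6"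
  define s where "s = Abs_fps (\<lambda>n. ?P (Suc n) $ n)"
  have close: "fps_X ^ n dvd s - ?P n" for n
  proof -
    have "(s - ?P n) $ i = 0" if "i < n" for i
    proof -
      have "fps_X ^ Suc i dvd ?P n - ?P (Suc i)" using that by (intro Pit_le) simp
      then have "(?P n - ?P (Suc i)) $ i = 0" using Xpow_dvd_iff by blast
      then show ?thesis by (simp add: s_def)
    qed
    then show ?thesis by (simp add: Xpow_dvd_iff)
  qed
  have s0: "s $ 0 = 0" using Pit_X[of a1 a2 a3 a4 a6 1] by (simp add: s_def X_dvd_iff)
  have "fps_X ^ n dvd Phi a1 a2 a3 a4 a6 s - s" for n
  proof -
    have a: "fps_X ^ Suc n dvd Phi a1 a2 a3 a4 a6 s - Phi a1 a2 a3 a4 a6 (?P n)"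
      by (rule Phi_contr[OF _ Pit_X close]) (simp add: X_dvd_iff s0)
    have "fps_X ^ Suc n dvd s - ?P (Suc n)" by (rule close)
    then have b: "fps_X ^ Suc n dvd ?P (Suc n) - s" by (subst minus_diff_eq[symmetric]) (simp only: dvd_minus_iff)
    have "Phi a1 a2 a3 a4 a6 s - s = (Phi a1 a2 a3 a4 a6 s - Phi a1 a2 a3 a4 a6 (?P n)) + (?P (Suc n) - s)"
      by (simp add: Pit_def)
    then have "fps_X ^ Suc n dvd Phi a1 a2 a3 a4 a6 s - s" using dvd_add[OF a b] by simp
    moreover have "fps_X ^ n dvd (fps_X::'a fps) ^ Suc n" by (rule le_imp_power_dvd) simp
    ultimately show ?thesis by (rule dvd_trans[rotated])
  qed
  then have "Phi a1 a2 a3 a4 a6 s - s = 0" by (rule all_Xpow_dvd)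
  with s0 show ?thesis by auto
qed

lemma tate_s_uniq:
  assumes "f $ 0 = 0" "f = Phi a1 a2 a3 a4 a6 f" "g $ 0 = 0" "g = Phi a1 a2 a3 a4 a6 g"
  shows "f = g"
proof -
  have "fps_X ^ n dvd f - g" for n
  proof (induction n)
    case (Suc n)
    have e: "Phi a1 a2 a3 a4 a6 f - Phi a1 a2 a3 a4 a6 g = f - g"
      by (simp only: assms(2)[symmetric] assms(4)[symmetric])
    have "fps_X dvd f" "fps_X dvd g" using assms(1,3) by (simp_all add: X_dvd_iff)
    from Phi_contr[OF this Suc, of a1 a2 a3 a4 a6] show ?case unfolding e .
  qed simp
  then show ?thesis using all_Xpow_dvd[of "f - g"] by simp
qed

lemma tate_s_props:
  "tate_s a1 a2 a3 a4 a6 $ 0 = 0 \<and> tate_s a1 a2 a3 a4 a6 = Phi a1 a2 a3 a4 a6 (tate_s a1 a2 a3 a4 a6)"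
proof -
  obtain s where s: "s $ 0 = 0 \<and> s = Phi a1 a2 a3 a4 a6 s" using tate_s_ex by blast
  have t: "tate_s a1 a2 a3 a4 a6 = s"
    unfolding tate_s_def Phi_def[symmetric]
  proof (rule the_equality)
    show "s $ 0 = 0 \<and> s = Phi a1 a2 a3 a4 a6 s" by (rule s)
    fix x assume x: "x $ 0 = 0 \<and> x = Phi a1 a2 a3 a4 a6 x"
    show "x = s" by (rule tate_s_uniq[OF conjunct1[OF x] conjunct2[OF x] conjunct1[OF s] conjunct2[OF s]])
  qed
  show ?thesis unfolding t by (rule s)
qed

lemma tate_s_shape:
  "\<exists>r. tate_s a1 a2 a3 a4 a6 = fps_X ^ 3 + fps_X ^ 4 * r"
proof -
  let ?s = "tate_s a1 a2 a3 a4 a6"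
  have eq: "?s = fps_X ^ 3 + fps_X * ?s * (fps_const a1 + fps_const a2 * fps_X + fps_const a4 * ?s)
     + ?s * ?s * (fps_const a3 + fps_const a6 * ?s)"
  proof -
    have "Phi a1 a2 a3 a4 a6 ?s = fps_X ^ 3 + fps_X * ?s * (fps_const a1 + fps_const a2 * fps_X + fps_const a4 * ?s)
     + ?s * ?s * (fps_const a3 + fps_const a6 * ?s)"
      unfolding Phi_def by (simp add: algebra_simps power2_eq_square power3_eq_cube)
    from trans[OF conjunct2[OF tate_s_props[of a1 a2 a3 a4 a6]] this] show ?thesis .
  qed
  have step: "fps_X ^ k dvd ?s \<Longrightarrow> k \<ge> 1 \<Longrightarrow> k \<le> 2 \<Longrightarrow> fps_X ^ Suc k dvd ?s" for k
  proof -
    assume h: "fps_X ^ k dvd ?s" "k \<ge> 1" "k \<le> 2"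
    have "Suc k \<le> 3" using h by simp
    then have 1: "fps_X ^ Suc k dvd (fps_X::'a fps) ^ 3" by (rule le_imp_power_dvd)
    have 2: "fps_X ^ Suc k dvd fps_X * ?s * (fps_const a1 + fps_const a2 * fps_X + fps_const a4 * ?s)"
      using h(1) by (simp add: mult_dvd_mono)
    have "fps_X ^ (k + k) dvd ?s * ?s" using h(1) by (simp add: mult_dvd_mono power_add)
    moreover have "Suc k \<le> k + k" using h by simp
    then have "fps_X ^ Suc k dvd (fps_X::'a fps) ^ (k + k)" by (rule le_imp_power_dvd)
    ultimately have 3: "fps_X ^ Suc k dvd ?s * ?s * (fps_const a3 + fps_const a6 * ?s)"
      by (meson dvd_mult2 dvd_trans)
    show ?thesis by (subst eq) (intro dvd_add 1 2 3)
  qed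
  have h1: "fps_X ^ 1 dvd ?s" using conjunct1[OF tate_s_props[of a1 a2 a3 a4 a6]] by (simp add: X_dvd_iff)
  have h2: "fps_X ^ Suc 1 dvd ?s" by (rule step[OF h1]) simp_all
  have h3: "fps_X ^ Suc (Suc 1) dvd ?s" by (rule step[OF h2]) simp_all
  then have s3: "fps_X ^ 3 dvd ?s" by (simp only: numeral_3_eq_3 One_nat_def)
  have x4: "(fps_X::'a fps)^4 = fps_X * fps_X^3" by (simp add: numeral_eq_Suc)
  have "fps_X * fps_X^3 dvd fps_X * ?s" by (rule mult_dvd_mono[OF dvd_refl s3])
  then have 2: "fps_X ^ 4 dvd fps_X * ?s * (fps_const a1 + fps_const a2 * fps_X + fps_const a4 * ?s)"
    unfolding x4 by (rule dvd_mult2)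
  have "fps_X ^ (3 + 3) dvd ?s * ?s" using mult_dvd_mono[OF s3 s3] by (simp only: power_add)
  moreover have "fps_X ^ 4 dvd (fps_X::'a fps) ^ (3 + 3)" by (rule le_imp_power_dvd) simp
  ultimately have "fps_X ^ 4 dvd ?s * ?s" by (rule dvd_trans[rotated])
  then have 3: "fps_X ^ 4 dvd ?s * ?s * (fps_const a3 + fps_const a6 * ?s)"
    by (rule dvd_mult2)
  have "?s - fps_X ^ 3 = fps_X * ?s * (fps_const a1 + fps_const a2 * fps_X + fps_const a4 * ?s)
     + ?s * ?s * (fps_const a3 + fps_const a6 * ?s)" by (subst (1) eq) simp
  then have "fps_X ^ 4 dvd ?s - fps_X ^ 3" using 2 3 by (metis dvd_add)
  then obtain r where "?s - fps_X ^ 3 = fps_X ^ 4 * r" by (elim dvdE)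
  then show ?thesis by (metis add.commute diff_add_cancel)
qed




definition Gc :: "'r::comm_ring_1 \<Rightarrow> 'r \<Rightarrow> 'r \<Rightarrow> 'r \<Rightarrow> 'r \<Rightarrow> 'r \<Rightarrow> 'r \<Rightarrow> 'r" where
  "Gc a1 a2 a3 a4 a6 t L = t^3 + a1*t*L + a2*t^2*L + a3*L^2 + a4*t*L^2 + a6*L^3 - L"

lemma poly_line_cubic: "poly (line_cubic a1 a2 a3 a4 a6 M B) x = Gc a1 a2 a3 a4 a6 x (M*x + B)"
  by (simp add: line_cubic_def Gc_def Let_def algebra_simps)

lemma line_cubic_coeffs: "line_cubic a1 a2 a3 a4 a6 M B =
  [: a3*B^2 + a6*B^3 - B, a1*B + 2*a3*M*B + a4*B^2 + 3*a6*M*B^2 - M,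
     a1*M + a2*B + a3*M^2 + 2*a4*M*B + 3*a6*M^2*B, 1 + a2*M + a4*M^2 + a6*M^3 :]"
  by (simp add: line_cubic_def Let_def power2_eq_square power3_eq_cube algebra_simps)

lemma cubic_factor:
  fixes c0 c1 c2 c3 u v w :: "'r::idom"
  assumes hu': "poly [:c0, c1, c2, c3:] u = 0" and hv': "poly [:c0, c1, c2, c3:] v = 0"
    and uv: "u \<noteq> v" and hw: "c3*(u+v+w) = -c2"
  shows "[:c0, c1, c2, c3:] = smult c3 ([:-u,1:] * [:-v,1:] * [:-w,1:])"
proof -
  have hu: "c3*u^3 + c2*u^2 + c1*u + c0 = 0" using hu' by (simp add: algebra_simps power2_eq_square power3_eq_cube)
  have hv: "c3*v^3 + c2*v^2 + c1*v + c0 = 0" using hv' by (simp add: algebra_simps power2_eq_square power3_eq_cube)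
  have "(u - v) * (c3*(u^2+u*v+v^2) + c2*(u+v) + c1) = 0"
  proof -
    have "(u - v) * (c3*(u^2+u*v+v^2) + c2*(u+v) + c1) = (c3*u^3 + c2*u^2 + c1*u + c0) - (c3*v^3 + c2*v^2 + c1*v + c0)"
      by (simp add: algebra_simps power2_eq_square power3_eq_cube)
    then show ?thesis using hu hv by simp
  qed
  with uv have K0: "c3*(u^2+u*v+v^2) + c2*(u+v) + c1 = 0" by simp
  have e1: "c1 = - c3*(u^2+u*v+v^2) - c2*(u+v)"
  proof -
    have "c1 = (c3*(u^2+u*v+v^2) + c2*(u+v) + c1) - c3*(u^2+u*v+v^2) - c2*(u+v)" by (simp add: algebra_simps)
    then show ?thesis unfolding K0 by simp
  qed
  have e2: "c2 = - c3*(u+v+w)" using hw by simp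
  have e0: "c0 = - (c3*u^3 + c2*u^2 + c1*u)"
  proof -
    have "c0 = (c3*u^3 + c2*u^2 + c1*u + c0) - (c3*u^3 + c2*u^2 + c1*u)" by simp
    then show ?thesis unfolding hu by simp
  qed
  show ?thesis unfolding e0 unfolding e1 unfolding e2
    by (simp add: algebra_simps power2_eq_square power3_eq_cube)
qed

lemma third_t_eq:
  fixes a1 a2 a3 a4 a6 M B u v ic :: "'r::idom"
  assumes ic: "(1 + a2*M + a4*M^2 + a6*M^3) * ic = 1"
    and hu: "Gc a1 a2 a3 a4 a6 u (M*u+B) = 0" and hv: "Gc a1 a2 a3 a4 a6 v (M*v+B) = 0"
    and uv: "u \<noteq> v"
  shows "third_t a1 a2 a3 a4 a6 M B u v = - (a1*M + a2*B + a3*M^2 + 2*a4*M*B + 3*a6*M^2*B) * ic - u - v"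
    and "line_cubic a1 a2 a3 a4 a6 M B = smult (1 + a2*M + a4*M^2 + a6*M^3)
           ([:-u,1:] * [:-v,1:] * [:-(- (a1*M + a2*B + a3*M^2 + 2*a4*M*B + 3*a6*M^2*B) * ic - u - v),1:])"
proof -
  define c3 where "c3 = 1 + a2*M + a4*M^2 + a6*M^3"
  define c2 where "c2 = a1*M + a2*B + a3*M^2 + 2*a4*M*B + 3*a6*M^2*B"
  define w0 where "w0 = - c2 * ic - u - v"
  have lc: "line_cubic a1 a2 a3 a4 a6 M B = [: a3*B^2 + a6*B^3 - B, a1*B + 2*a3*M*B + a4*B^2 + 3*a6*M*B^2 - M, c2, c3 :]"
    unfolding line_cubic_coeffs c2_def c3_def ..
  have c3nz: "c3 \<noteq> 0" using ic c3_def by auto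
  have fac: "line_cubic a1 a2 a3 a4 a6 M B = smult c3 ([:-u,1:] * [:-v,1:] * [:-w0,1:])"
    unfolding lc
  proof (rule cubic_factor[OF _ _ uv])
    show "poly [:a3*B^2 + a6*B^3 - B, a1*B + 2*a3*M*B + a4*B^2 + 3*a6*M*B^2 - M, c2, c3:] u = 0"
      using hu unfolding lc[symmetric] poly_line_cubic .
    show "poly [:a3*B^2 + a6*B^3 - B, a1*B + 2*a3*M*B + a4*B^2 + 3*a6*M*B^2 - M, c2, c3:] v = 0"
      using hv unfolding lc[symmetric] poly_line_cubic .
    have "c3 * (u + v + w0) = - c2 * (c3 * ic)" by (simp add: w0_def algebra_simps)
    then show "c3 * (u + v + w0) = - c2" using ic c3_def by simp
  qed
  have co: "coeff (line_cubic a1 a2 a3 a4 a6 M B) 3 = c3" unfolding lc by (simp add: numeral_eq_Suc)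
  show "third_t a1 a2 a3 a4 a6 M B u v = - (a1*M + a2*B + a3*M^2 + 2*a4*M*B + 3*a6*M^2*B) * ic - u - v"
    unfolding third_t_def co c2_def[symmetric] w0_def[symmetric]
  proof (rule the_equality)
    show "line_cubic a1 a2 a3 a4 a6 M B = smult c3 ([:-u,1:] * [:-v,1:] * [:-w0,1:])" by (rule fac)
    fix w assume "line_cubic a1 a2 a3 a4 a6 M B = smult c3 ([:-u,1:] * [:-v,1:] * [:-w,1:])"
    with fac have "smult c3 (([:-u,1:] * [:-v,1:]) * [:-w,1:]) = smult c3 (([:-u,1:] * [:-v,1:]) * [:-w0,1:])"
      by simp
    with c3nz have "([:-u,1:] * [:-v,1:]) * [:-w,1:] = ([:-u,1:] * [:-v,1:]) * [:-w0,1:]"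
      by simp
    moreover have "[:-u,1:] * [:-v,1:] \<noteq> (0::'r poly)" by simp
    ultimately have "[:-w,1:] = [:-w0,1:]" by simp
    then show "w = w0" by simp
  qed
  show "line_cubic a1 a2 a3 a4 a6 M B = smult (1 + a2*M + a4*M^2 + a6*M^3)
           ([:-u,1:] * [:-v,1:] * [:-(- (a1*M + a2*B + a3*M^2 + 2*a4*M*B + 3*a6*M^2*B) * ic - u - v),1:])"
    using fac unfolding w0_def c2_def c3_def .
qed

lemma key_identity:
  fixes a1 a2 a3 a4 a6 T1 T2 M B t3 iD N :: "'r::idom"
  assumes G1: "Gc a1 a2 a3 a4 a6 T1 (M*T1+B) = 0" and G2: "Gc a1 a2 a3 a4 a6 T2 (M*T2+B) = 0"
    and T12: "T1 \<noteq> T2" and T1: "T1 \<noteq> 0" and T2: "T2 \<noteq> 0" and t3: "t3 \<noteq> 0"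
    and DiD: "(1 - a3*B - a6*B^2) * iD = 1"
    and BD: "B * (1 - a3*B - a6*B^2) = (1 + a2*M + a4*M^2 + a6*M^3) * T1 * T2 * t3"
    and N: "N = M + T1 * T2 * (1 + a2*M + a4*M^2 + a6*M^3) * iD"
    and q: "t3 * ((1 + a2*N + a4*N^2 + a6*N^3) * t3 + (a1*N + a3*N^2)) = N"
  shows "(1 - a3*B - a6*B^2)^2 * (- (a1*N + a3*N^2) - (1 + a2*N + a4*N^2 + a6*N^3) * t3)
     = (T1 + T2 - a1 * T1 * T2 - a3 * ((T1 + T2) * B + T1 * T2 * M) - a4 * T1 * T2 * B
               - a6 * B * ((T1 + T2) * B + 2 * T1 * T2 * M)) * (1 + a2*M + a4*M^2 + a6*M^3)"
proof -
  define D where "D = 1 - a3*B - a6*B^2"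
  define c3 where "c3 = 1 + a2*M + a4*M^2 + a6*M^3"
  define X where "X = T1 + T2 - a1 * T1 * T2 - a3 * ((T1 + T2) * B + T1 * T2 * M) - a4 * T1 * T2 * B
               - a6 * B * ((T1 + T2) * B + 2 * T1 * T2 * M)"
  define c3N where "c3N = 1 + a2*N + a4*N^2 + a6*N^3"
  define c2N where "c2N = a1*N + a3*N^2"
  have "(T1 - T2) * (X*B + T1*T2*M*D + T1^2*T2^2*c3) =
        T2^2 * Gc a1 a2 a3 a4 a6 T1 (M*T1+B) - T1^2 * Gc a1 a2 a3 a4 a6 T2 (M*T2+B)"
    unfolding X_def D_def c3_def Gc_def by (simp add: algebra_simps power2_eq_square power3_eq_cube)
  then have K: "X*B + T1*T2*M*D + T1^2*T2^2*c3 = 0" using G1 G2 T12 by simp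
  have l: "t3 * (D^2 * (- c2N - c3N * t3)) = - (D^2) * N"
  proof -
    have "t3 * (D^2 * (- c2N - c3N * t3)) = - (D^2) * (t3 * (c3N * t3 + c2N))" by (simp add: algebra_simps)
    also have "\<dots> = - (D^2) * N" using q unfolding c3N_def c2N_def by simp
    finally show ?thesis .
  qed
  have r: "T1 * T2 * (t3 * (X * c3)) = T1 * T2 * (- (D^2) * N)"
  proof -
    have "T1 * T2 * (t3 * (X * c3)) = X * (c3 * T1 * T2 * t3)" by (simp add: algebra_simps)
    also have "\<dots> = X * (B * D)" using BD unfolding D_def c3_def by (simp only:)
    also have "\<dots> = (X * B) * D" by (simp only: mult.assoc)
    also have "X * B = - (T1*T2*M*D + T1^2*T2^2*c3)" using K by (simp only: eq_neg_iff_add_eq_0 add.assoc)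
    also have "- (T1*T2*M*D + T1^2*T2^2*c3) * D = - D * (T1*T2*M*D + T1^2*T2^2*c3)" by (simp only: mult.commute mult_minus_left mult_minus_right)
    also have "\<dots> = - D * (T1*T2*M*D + T1^2*T2^2*c3 * (D * iD))" using DiD D_def by simp
    also have "\<dots> = T1 * T2 * (- (D^2) * N)" unfolding N c3_def by (simp add: algebra_simps power2_eq_square)
    finally show ?thesis .
  qed
  have nz: "T1 * T2 \<noteq> 0" using T1 T2 by simp
  from r have r2: "t3 * (X * c3) = - (D^2) * N" by (rule mult_left_cancel[THEN iffD1, OF nz])
  have "t3 * (D^2 * (- c2N - c3N * t3)) = t3 * (X * c3)" by (simp only: l r2)
  then have "D^2 * (- c2N - c3N * t3) = X * c3" by (rule mult_left_cancel[THEN iffD1, OF t3])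
  then show ?thesis unfolding D_def c3_def X_def c3N_def c2N_def .
qed




lemma at_t2_nth [simp]: "at_t2 f $ n = fps_const (f $ n)"
  by (simp add: at_t2_def)

lemma at_t2_add [simp]: "at_t2 (f + g) = at_t2 f + at_t2 g"
  by (rule fps_ext) simp

lemma at_t2_diff [simp]: "at_t2 (f - (g::'a::comm_ring_1 fps)) = at_t2 f - at_t2 g"
  by (rule fps_ext) simp

lemma fps_const_sum: "fps_const (sum h A) = sum (\<lambda>x. fps_const (h x)) A"
  using sum_comp_morphism[of fps_const h A] by (simp add: o_def)

lemma at_t2_mult [simp]: "at_t2 (f * (g::'a::comm_ring_1 fps)) = at_t2 f * at_t2 g"
  by (rule fps_ext) (simp add: fps_mult_nth fps_const_sum)

lemma at_t2_one [simp]: "at_t2 (1::'a::comm_ring_1 fps) = 1"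
  by (rule fps_ext) simp

lemma at_t2_power [simp]: "at_t2 (f ^ n :: 'a::comm_ring_1 fps) = at_t2 f ^ n"
  by (induction n) simp_all

lemma at_t2_const [simp]: "at_t2 (fps_const (a::'a::comm_ring_1)) = cc a"
  by (rule fps_ext) (simp add: cc_def)

lemma at_t2_X [simp]: "at_t2 (fps_X :: 'a::comm_ring_1 fps) = T2"
  by (rule fps_ext) (simp add: T2_def)

lemma at_t1_add [simp]: "at_t1 (f + g) = at_t1 f + at_t1 (g::'a::comm_ring_1 fps)"
  by (simp add: at_t1_def)
lemma at_t1_mult [simp]: "at_t1 (f * g) = at_t1 f * at_t1 (g::'a::comm_ring_1 fps)"
  by (simp add: at_t1_def)
lemma at_t1_power [simp]: "at_t1 (f ^ n) = at_t1 (f::'a::comm_ring_1 fps) ^ n"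
  by (simp add: at_t1_def)
lemma at_t1_const [simp]: "at_t1 (fps_const (a::'a::comm_ring_1)) = cc a"
  by (simp add: at_t1_def cc_def)
lemma at_t1_X [simp]: "at_t1 (fps_X :: 'a::comm_ring_1 fps) = T1"
  by (simp add: at_t1_def T1_def)

lemma curve_t1:
  "Gc (cc a1) (cc a2) (cc a3) (cc a4) (cc a6) T1 (at_t1 (tate_s a1 a2 a3 a4 a6)) = (0::'a::field fps fps)"
proof -
  let ?s = "tate_s a1 a2 a3 a4 a6"
  have "at_t1 ?s = at_t1 (Phi a1 a2 a3 a4 a6 ?s)" using conjunct2[OF tate_s_props] by metis
  also have "\<dots> = T1^3 + cc a1 * T1 * at_t1 ?s + cc a2 * T1^2 * at_t1 ?s + cc a3 * at_t1 ?s ^ 2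
     + cc a4 * T1 * at_t1 ?s ^ 2 + cc a6 * at_t1 ?s ^ 3"
    unfolding Phi_def by simp
  finally show ?thesis unfolding Gc_def by (simp add: algebra_simps)
qed

lemma curve_t2:
  "Gc (cc a1) (cc a2) (cc a3) (cc a4) (cc a6) T2 (at_t2 (tate_s a1 a2 a3 a4 a6)) = (0::'a::field fps fps)"
proof -
  let ?s = "tate_s a1 a2 a3 a4 a6"
  have "at_t2 ?s = at_t2 (Phi a1 a2 a3 a4 a6 ?s)" using conjunct2[OF tate_s_props] by metis
  also have "\<dots> = T2^3 + cc a1 * T2 * at_t2 ?s + cc a2 * T2^2 * at_t2 ?s + cc a3 * at_t2 ?s ^ 2
     + cc a4 * T2 * at_t2 ?s ^ 2 + cc a6 * at_t2 ?s ^ 3"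
    unfolding Phi_def by simp
  finally show ?thesis unfolding Gc_def by (simp add: algebra_simps)
qed

definition val0 :: "'a::comm_ring_1 fps fps \<Rightarrow> 'a" where "val0 x = x $ 0 $ 0"

lemma val0_simps [simp]:
  "val0 (x + y) = val0 x + val0 y" "val0 (x - y) = val0 x - val0 y" "val0 (x * y) = val0 x * val0 y"
  "val0 (- x) = - val0 x"
  "val0 1 = 1" "val0 (cc a) = a" "val0 T1 = 0" "val0 T2 = 0"
  by (simp_all add: val0_def cc_def T1_def T2_def)

lemma val0_power [simp]: "val0 (x ^ n) = val0 x ^ n"
  by (induction n) simp_all

lemma val0_numeral [simp]: "val0 (numeral n) = numeral n"
  by (simp add: val0_def numeral_fps_const)

lemma unit_fpsfps:
  fixes G :: "'a::field fps fps"
  assumes "val0 G \<noteq> 0"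
  shows "G * inverse G = 1" "F / G = F * inverse G"
proof -
  have g00: "G $ 0 $ 0 \<noteq> 0" using assms by (simp add: val0_def)
  then have g0: "G $ 0 \<noteq> 0" by auto
  have "G $ 0 * inverse (G $ 0) = 1" using inverse_mult_eq_1'[OF g00] .
  from fps_right_inverse[OF this] show "G * inverse G = 1" by (simp add: fps_inverse_def)
  show "F / G = F * inverse G" using g0 by (simp add: fps_divide_def)
qed

lemma qdiv_eq: "d \<noteq> 0 \<Longrightarrow> q * d = a \<Longrightarrow> qdiv a d = (q::'r::idom)"
  unfolding qdiv_def by (rule the_equality) auto

definition Mq :: "'a::comm_ring_1 fps \<Rightarrow> 'a fps fps" where
  "Mq S = Abs_fps (\<lambda>n. fps_shift (n+1) S)"

lemma Mq_prop:
  fixes S :: "'a::comm_ring_1 fps"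
  assumes S0: "S $ 0 = 0"
  shows "Mq S * (T1 - T2) = at_t1 S - at_t2 S"
proof (rule fps_ext)
  fix n
  show "(Mq S * (T1 - T2)) $ n = (at_t1 S - at_t2 S) $ n"
  proof (rule fps_ext)
    fix i
    have "(Mq S * (T1 - T2)) $ n = fps_X * fps_shift (n+1) S - (fps_X * Mq S) $ n"
      by (simp add: T1_def T2_def algebra_simps Mq_def)
    then show "(Mq S * (T1 - T2)) $ n $ i = (at_t1 S - at_t2 S) $ n $ i"
      using S0 by (cases n; cases i) (simp_all add: Mq_def at_t1_def)
  qed
qed

lemma T12_nz: "T1 - T2 \<noteq> (0::'a::comm_ring_1 fps fps)"
proof
  assume "T1 - T2 = (0::'a fps fps)"
  then have "(T1 - T2) $ 1 = (0::'a fps fps) $ 1" by simp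
  then show False by (simp add: T1_def T2_def)
qed

lemma T1_nz: "T1 \<noteq> (0::'a::comm_ring_1 fps fps)"
proof
  assume "T1 = (0::'a fps fps)"
  then have "T1 $ 0 $ 1 = (0::'a fps fps) $ 0 $ 1" by simp
  then show False by (simp add: T1_def)
qed

lemma T2_nz: "T2 \<noteq> (0::'a::comm_ring_1 fps fps)"
proof
  assume "T2 = (0::'a fps fps)"
  then have "T2 $ 1 = (0::'a fps fps) $ 1" by simp
  then show False by (simp add: T2_def)
qed

lemma T12_ne: "T1 \<noteq> (T2::'a::comm_ring_1 fps fps)"
  using T12_nz by auto




lemma main_gen:
  fixes a1 a2 a3 a4 a6 :: "'a::field"
  shows "(let m = chord_m a1 a2 a3 a4 a6; b = chord_b a1 a2 a3 a4 a6;
              c1 = cc a1; c2 = cc a2; c3 = cc a3; c4 = cc a4; c6 = cc a6;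
              n = m + T1 * T2 * (1 + c2 * m + c4 * m ^ 2 + c6 * m ^ 3)
                    / (1 - c3 * b - c6 * b ^ 2)
          in formal_group_F a1 a2 a3 a4 a6 =
             (T1 + T2 - c1 * T1 * T2 - c3 * ((T1 + T2) * b + T1 * T2 * m) - c4 * T1 * T2 * b
               - c6 * b * ((T1 + T2) * b + 2 * T1 * T2 * m))
             * (1 + c2 * m + c4 * m ^ 2 + c6 * m ^ 3)
             / ((1 + c2 * n + c4 * n ^ 2 + c6 * n ^ 3) * (1 - c3 * b - c6 * b ^ 2) ^ 2))"
proof -
  define S where "S = tate_s a1 a2 a3 a4 a6"
  define c1 where "c1 = (cc a1 :: 'a fps fps)"
  define c2 where "c2 = (cc a2 :: 'a fps fps)"
  define c3 where "c3 = (cc a3 :: 'a fps fps)"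
  define c4 where "c4 = (cc a4 :: 'a fps fps)"
  define c6 where "c6 = (cc a6 :: 'a fps fps)"
  define s1 where "s1 = at_t1 S"
  define s2 where "s2 = at_t2 S"
  define M where "M = Mq S"
  define B where "B = s1 - T1 * M"
  have S0: "S $ 0 = 0" using tate_s_props unfolding S_def by blast
  obtain r where Sr: "S = fps_X ^ 3 + fps_X ^ 4 * r" using tate_s_shape unfolding S_def by blast
  have S1: "S $ 1 = 0" and S3: "S $ 3 = 1" unfolding Sr by (simp_all add: fps_X_power_mult_nth)
  have Mp: "M * (T1 - T2) = s1 - s2" unfolding M_def s1_def s2_def by (rule Mq_prop[OF S0])
  have cm: "chord_m a1 a2 a3 a4 a6 = M"
    unfolding chord_m_def Let_def S_def[symmetric] s1_def[symmetric] s2_def[symmetric]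
    by (rule qdiv_eq[OF T12_nz Mp])
  have Bp: "B * (T1 - T2) = T1 * s2 - T2 * s1"
  proof -
    have "B * (T1 - T2) = s1 * (T1 - T2) - T1 * (M * (T1 - T2))" unfolding B_def by (simp add: algebra_simps)
    also have "\<dots> = T1 * s2 - T2 * s1" unfolding Mp by (simp add: algebra_simps)
    finally show ?thesis .
  qed
  have cb: "chord_b a1 a2 a3 a4 a6 = B"
    unfolding chord_b_def Let_def S_def[symmetric] s1_def[symmetric] s2_def[symmetric]
    by (rule qdiv_eq[OF T12_nz Bp])
  have vM: "val0 M = 0" unfolding M_def Mq_def val0_def using S1 by simp
  have vs1: "val0 s1 = 0" unfolding s1_def at_t1_def val0_def using S0 by simp
  have vB: "val0 B = 0" unfolding B_def using vM vs1 by simp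
  have G1: "Gc c1 c2 c3 c4 c6 T1 (M*T1 + B) = 0"
  proof -
    have "M*T1 + B = s1" unfolding B_def by (simp add: algebra_simps)
    then show ?thesis using curve_t1 unfolding c1_def c2_def c3_def c4_def c6_def s1_def S_def by metis
  qed
  have G2: "Gc c1 c2 c3 c4 c6 T2 (M*T2 + B) = 0"
  proof -
    have "M*T2 + B = s1 - M * (T1 - T2)" unfolding B_def by (simp add: algebra_simps)
    also have "\<dots> = s2" unfolding Mp by simp
    finally show ?thesis using curve_t2 unfolding c1_def c2_def c3_def c4_def c6_def s2_def S_def by metis
  qed
  define L where "L = 1 + c2*M + c4*M^2 + c6*M^3"
  have vL: "val0 L = 1" unfolding L_def using vM by simp
  have LiL: "L * inverse L = 1" using unit_fpsfps(1)[of L] vL by simp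
  define t3 where "t3 = third_t c1 c2 c3 c4 c6 M B T1 T2"
  have t3eq: "t3 = - (c1*M + c2*B + c3*M^2 + 2*c4*M*B + 3*c6*M^2*B) * inverse L - T1 - T2"
    unfolding t3_def L_def by (rule third_t_eq(1)[OF LiL[unfolded L_def] G1 G2 T12_ne])
  have fac: "line_cubic c1 c2 c3 c4 c6 M B = smult L ([:-T1,1:] * [:-T2,1:] * [:-t3,1:])"
    unfolding t3eq unfolding L_def by (rule third_t_eq(2)[OF LiL[unfolded L_def] G1 G2 T12_ne])
  define D where "D = 1 - c3*B - c6*B^2"
  have vD: "val0 D = 1" unfolding D_def using vB by simp
  have DiD: "D * inverse D = 1" using unit_fpsfps(1)[of D] vD by simp
  have BD: "B * D = L * T1 * T2 * t3"
  proof -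
    have "poly (line_cubic c1 c2 c3 c4 c6 M B) 0 = - (B * D)"
      unfolding poly_line_cubic Gc_def D_def by (simp add: algebra_simps power2_eq_square power3_eq_cube)
    moreover have "poly (line_cubic c1 c2 c3 c4 c6 M B) 0 = - (L * T1 * T2 * t3)"
      unfolding fac by (simp add: algebra_simps)
    ultimately show ?thesis by simp
  qed
  have Gt3: "Gc c1 c2 c3 c4 c6 t3 (M*t3 + B) = 0"
  proof -
    have z: "poly [:-t3,1:] t3 = 0" by simp
    have "poly (line_cubic c1 c2 c3 c4 c6 M B) t3 = 0" unfolding fac poly_smult poly_mult z by simp
    then show ?thesis unfolding poly_line_cubic .
  qed
  have Bnz: "B \<noteq> 0"
  proof
    assume "B = 0"
    then have "(T1 * s2 - T2 * s1) $ 3 $ 1 = 0" using Bp by simp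
    moreover have "(T1 * s2 - T2 * s1) $ 3 $ 1 = 1"
      unfolding s1_def s2_def using S3 by (simp add: T1_def T2_def at_t1_def)
    ultimately show False by simp
  qed
  have Dnz: "D \<noteq> 0" using vD by (auto simp: val0_def)
  have t3nz: "t3 \<noteq> 0"
  proof
    assume "t3 = 0"
    then have "B * D = 0" using BD by simp
    with Dnz Bnz show False by simp
  qed
  define N where "N = M + T1 * T2 * L * inverse D"
  have Nt3: "N * t3 = M * t3 + B"
  proof -
    have "N * t3 = M * t3 + (L * T1 * T2 * t3) * inverse D" unfolding N_def by (simp add: algebra_simps)
    also have "\<dots> = M * t3 + B * (D * inverse D)" unfolding BD[symmetric] by (simp add: algebra_simps)
    finally show "N * t3 = M * t3 + B" using DiD by simp
  qed
  have Nq: "qdiv (M * t3 + B) t3 = N" by (rule qdiv_eq[OF t3nz Nt3])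
  have vN: "val0 N = 0" unfolding N_def using vM by simp
  define LN where "LN = 1 + c2*N + c4*N^2 + c6*N^3"
  have vLN: "val0 LN = 1" unfolding LN_def using vN by simp
  have LNi: "LN * inverse LN = 1" using unit_fpsfps(1)[of LN] vLN by simp
  have H0: "Gc c1 c2 c3 c4 c6 0 (N*0 + 0) = 0" by (simp add: Gc_def)
  have Ht3: "Gc c1 c2 c3 c4 c6 t3 (N*t3 + 0) = 0" using Gt3 Nt3 by simp
  have ne: "(0::'a fps fps) \<noteq> t3" using t3nz by simp
  have Feq: "third_t c1 c2 c3 c4 c6 N 0 0 t3 = - (c1*N + c2*0 + c3*N^2 + 2*c4*N*0 + 3*c6*N^2*0) * inverse LN - 0 - t3"
    unfolding LN_def by (rule third_t_eq(1)[OF LNi[unfolded LN_def] H0 Ht3 ne])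
  have Fdef: "formal_group_F a1 a2 a3 a4 a6 = third_t c1 c2 c3 c4 c6 N 0 0 t3"
    unfolding formal_group_F_def Let_def cm cb c1_def[symmetric] c2_def[symmetric] c3_def[symmetric]
      c4_def[symmetric] c6_def[symmetric] t3_def[symmetric] Nq ..
  have q: "t3 * (LN * t3 + (c1*N + c3*N^2)) = N"
  proof -
    have "Gc c1 c2 c3 c4 c6 t3 (N*t3+0) = t3 * (t3 * (LN*t3 + (c1*N + c3*N^2)) - N)"
      unfolding Gc_def LN_def by (simp add: algebra_simps power2_eq_square power3_eq_cube)
    then have "t3 * (LN*t3 + (c1*N + c3*N^2)) - N = 0" using Ht3 t3nz by simp
    then show ?thesis by simp
  qed
  define Xe where "Xe = T1 + T2 - c1 * T1 * T2 - c3 * ((T1 + T2) * B + T1 * T2 * M) - c4 * T1 * T2 * B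
               - c6 * B * ((T1 + T2) * B + 2 * T1 * T2 * M)"
  have key: "D^2 * (- (c1*N + c3*N^2) - LN * t3) = Xe * L"
    using key_identity[OF G1 G2 T12_ne T1_nz T2_nz t3nz DiD[unfolded D_def] BD[unfolded D_def L_def]
       N_def[unfolded L_def D_def] q[unfolded LN_def]]
    unfolding D_def LN_def Xe_def L_def .
  define Y where "Y = LN * D^2"
  have vY: "val0 Y = 1" unfolding Y_def using vLN vD by simp
  have YiY: "Y * inverse Y = 1" using unit_fpsfps(1)[of Y] vY by simp
  have YF: "Y * third_t c1 c2 c3 c4 c6 N 0 0 t3 = Xe * L"
  proof -
    have "Y * third_t c1 c2 c3 c4 c6 N 0 0 t3 = D^2 * (- (c1*N + c3*N^2) * (LN * inverse LN) - LN * t3)"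
      unfolding Feq Y_def by (simp add: algebra_simps)
    also have "\<dots> = Xe * L" using LNi key by simp
    finally show ?thesis .
  qed
  have final: "formal_group_F a1 a2 a3 a4 a6 = Xe * L / Y"
  proof -
    have "Xe * L / Y = Xe * L * inverse Y" using unit_fpsfps(2)[of Y] vY by simp
    also have "\<dots> = inverse Y * (Y * third_t c1 c2 c3 c4 c6 N 0 0 t3)" unfolding YF by (simp add: algebra_simps)
    also have "\<dots> = third_t c1 c2 c3 c4 c6 N 0 0 t3" using YiY by (simp add: algebra_simps)
    finally show ?thesis unfolding Fdef ..
  qed
  have nn: "M + T1 * T2 * (1 + c2 * M + c4 * M ^ 2 + c6 * M ^ 3) / (1 - c3 * B - c6 * B ^ 2) = N"
  proof -
    have "T1 * T2 * L / D = T1 * T2 * L * inverse D" using unit_fpsfps(2)[of D] vD by simp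
    then show ?thesis unfolding N_def L_def[symmetric] D_def[symmetric] by simp
  qed
  show ?thesis
    unfolding Let_def cm cb c1_def[symmetric] c2_def[symmetric] c3_def[symmetric]
      c4_def[symmetric] c6_def[symmetric] nn
    using final unfolding Xe_def L_def Y_def LN_def D_def .
qed



theorem mainTheorem1:
  shows "(let m = chord_m mu1 mu2 mu3 mu4 mu6; b = chord_b mu1 mu2 mu3 mu4 mu6;
              c1 = cc mu1; c2 = cc mu2; c3 = cc mu3; c4 = cc mu4; c6 = cc mu6;
              n = m + T1 * T2 * (1 + c2 * m + c4 * m ^ 2 + c6 * m ^ 3)
                    / (1 - c3 * b - c6 * b ^ 2)
          in formal_group_F mu1 mu2 mu3 mu4 mu6 =
             (T1 + T2 - c1 * T1 * T2 - c3 * ((T1 + T2) * b + T1 * T2 * m) - c4 * T1 * T2 * b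
               - c6 * b * ((T1 + T2) * b + 2 * T1 * T2 * m))
             * (1 + c2 * m + c4 * m ^ 2 + c6 * m ^ 3)
             / ((1 + c2 * n + c4 * n ^ 2 + c6 * n ^ 3) * (1 - c3 * b - c6 * b ^ 2) ^ 2))"
    using main_gen[of mu1 mu2 mu3 mu4 mu6] .

end
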